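(* Let $D$ be a diagram of a link $L$, let $n\ge3$ be odd, and let $c_1,\dots,c_n\in MG(L)$ be conjugates of elements $a_1,\dots,a_n\in A(D)$ respectively. Then $c_1c_2^{-1}c_3c_4^{-1}\cdots c_{n-1}^{-1}c_n=c_nc_{n-1}^{-1}c_{n-2}\cdots c_2^{-1}c_1$.
   Context: Let $L$ be an oriented classical link with diagram $D$; $A(D)$ is the set of arcs of $D$. At a crossing, $a_1$ denotes the overpassing arc, $a_2$ the underpassing arc on the right of $a_1$ (with respect to the orientation of $a_1$), $a_3$ the underpassing arc on the left of $a_1$. The medial group $MG(L)$ is the group generated by $A(D)$ subject to the relations (i) $c_1c_2^{-1}c_3=c_3c_2^{-1}c_1$ whenever $c_1,c_2,c_3$ are conjugates of elements of $A(D)$, and (ii) $a_1a_2a_1^{-1}=a_3$ at every crossing of $D$. *)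

theory Defs
  imports "HOL-Algebra.Group"
begin

text \<open>A link diagram is represented by its arc type 'a (the set A(D) = UNIV) and its
crossings, each crossing given as a triple (a1, a2, a3): overpassing arc a1,
underpassing arc a2 on the right of a1, underpassing arc a3 on the left of a1.
Group words over A(D) are lists of letters (a, True) = a, (a, False) = a^-1.\<close>

type_synonym 'a word = "('a \<times> bool) list"

definition winv :: "'a word \<Rightarrow> 'a word" where
  "winv w = rev (map (\<lambda>(a, b). (a, \<not> b)) w)"

definition wconj :: "'a word \<Rightarrow> 'a \<Rightarrow> 'a word" where
  "wconj g a = g @ [(a, True)] @ winv g"

inductive mg_eq :: "('a \<times> 'a \<times> 'a) set \<Rightarrow> 'a word \<Rightarrow> 'a word \<Rightarrow> bool"
  for C :: "('a \<times> 'a \<times> 'a) set" where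
  mg_refl: "mg_eq C u u"
| mg_sym: "mg_eq C u v \<Longrightarrow> mg_eq C v u"
| mg_trans: "mg_eq C u v \<Longrightarrow> mg_eq C v w \<Longrightarrow> mg_eq C u w"
| mg_cong: "mg_eq C u v \<Longrightarrow> mg_eq C (p @ u @ q) (p @ v @ q)"
| mg_free: "mg_eq C [(a, b), (a, \<not> b)] []"
| mg_medial: "mg_eq C (wconj g1 x1 @ winv (wconj g2 x2) @ wconj g3 x3)
                     (wconj g3 x3 @ winv (wconj g2 x2) @ wconj g1 x1)"
| mg_cross: "(a1, a2, a3) \<in> C \<Longrightarrow> mg_eq C [(a1, True), (a2, True), (a1, False)] [(a3, True)]"

definition mg_class :: "('a \<times> 'a \<times> 'a) set \<Rightarrow> 'a word \<Rightarrow> 'a word set" where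
  "mg_class C w = {v. mg_eq C w v}"

definition medial_group :: "('a \<times> 'a \<times> 'a) set \<Rightarrow> 'a word set monoid" where
  "medial_group C = \<lparr> carrier = range (mg_class C),
     mult = (\<lambda>U V. \<Union>u\<in>U. \<Union>v\<in>V. mg_class C (u @ v)),
     one = mg_class C [] \<rparr>"

definition arc_gen :: "('a \<times> 'a \<times> 'a) set \<Rightarrow> 'a \<Rightarrow> 'a word set" where
  "arc_gen C a = mg_class C [(a, True)]"

definition alt_prod :: "('g, 'm) monoid_scheme \<Rightarrow> (nat \<Rightarrow> 'g) \<Rightarrow> nat list \<Rightarrow> 'g" where
  "alt_prod G c is = foldr (\<lambda>i acc. (if odd i then c i else inv\<^bsub>G\<^esub> (c i)) \<otimes>\<^bsub>G\<^esub> acc) is \<one>\<^bsub>G\<^esub>"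

end

theory Submission
  imports Defs
begin

lemma mg_class_eq: "mg_class C u = mg_class C v \<longleftrightarrow> mg_eq C u v"
proof
  assume "mg_class C u = mg_class C v"
  moreover have "v \<in> mg_class C v" by (simp add: mg_class_def mg_refl)
  ultimately show "mg_eq C u v" unfolding mg_class_def by blast
next
  assume "mg_eq C u v"
  then show "mg_class C u = mg_class C v"
  proof -
    have "\<And>w. mg_eq C u w \<longleftrightarrow> mg_eq C v w"
    proof
      fix w assume "mg_eq C u w" then show "mg_eq C v w"
        using mg_sym[OF \<open>mg_eq C u v\<close>] by (rule mg_trans[rotated])
    next
      fix w assume "mg_eq C v w" then show "mg_eq C u w"
        using \<open>mg_eq C u v\<close> by (rule mg_trans[rotated])
    qed
    then show ?thesis unfolding mg_class_def by (intro Collect_cong) 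
  qed
qed

lemma mg_app: "mg_eq C u u' \<Longrightarrow> mg_eq C v v' \<Longrightarrow> mg_eq C (u @ v) (u' @ v')"
proof -
  assume a: "mg_eq C u u'" "mg_eq C v v'"
  have "mg_eq C (u @ v) (u' @ v)" using mg_cong[OF a(1), of "[]" v] by simp
  moreover have "mg_eq C (u' @ v) (u' @ v')" using mg_cong[OF a(2), of u' "[]"] by simp
  ultimately show ?thesis by (rule mg_trans)
qed

lemma mg_mult: "mg_class C u \<otimes>\<^bsub>medial_group C\<^esub> mg_class C v = mg_class C (u @ v)"
proof -
  have eq1: "\<And>u' v'. u' \<in> mg_class C u \<Longrightarrow> v' \<in> mg_class C v \<Longrightarrow> mg_class C (u' @ v') = mg_class C (u @ v)"
  proof -
    fix u' v' assume "u' \<in> mg_class C u" "v' \<in> mg_class C v"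
    then have "mg_eq C u u'" "mg_eq C v v'" by (simp_all add: mg_class_def)
    then have "mg_eq C (u' @ v') (u @ v)" by (intro mg_sym[OF mg_app])
    then show "mg_class C (u' @ v') = mg_class C (u @ v)" by (simp only: mg_class_eq)
  qed
  have eq2: "u \<in> mg_class C u" "v \<in> mg_class C v" by (simp_all add: mg_class_def mg_refl)
  note eqs = eq1 eq2
  have "(\<Union>u'\<in>mg_class C u. \<Union>v'\<in>mg_class C v. mg_class C (u' @ v')) = mg_class C (u @ v)"
  proof (rule SUP_eq_const)
    show "mg_class C u \<noteq> {}" using eqs by blast
  next
    fix u' assume "u' \<in> mg_class C u"
    show "(\<Union>v'\<in>mg_class C v. mg_class C (u' @ v')) = mg_class C (u @ v)"
    proof (rule SUP_eq_const)
      show "mg_class C v \<noteq> {}" using eqs by blast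
    next
      fix v' assume "v' \<in> mg_class C v"
      then show "mg_class C (u' @ v') = mg_class C (u @ v)" using eqs \<open>u' \<in> _\<close> by blast
    qed
  qed
  then show ?thesis unfolding medial_group_def by simp
qed

lemma winv_Cons: "winv (x # w) = winv w @ [(fst x, \<not> snd x)]"
  by (simp add: winv_def case_prod_beta)

lemma winv_winv: "winv (winv w) = w"
  by (induction w) (auto simp: winv_def)

lemma winv_append: "winv (u @ v) = winv v @ winv u"
  by (simp add: winv_def)

lemma winv_cancel: "mg_eq C (winv w @ w) []"
proof (induction w)
  case Nil then show ?case by (simp add: winv_def mg_refl)
next
  case (Cons x w)
  obtain a b where x: "x = (a, b)" by force
  have "mg_eq C ([(a, \<not> b), (a, b)]) []" using mg_free[of C a "\<not> b"] by simp
  then have "mg_eq C (winv w @ [(a, \<not> b), (a, b)] @ w) (winv w @ [] @ w)" by (rule mg_cong)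
  moreover have "winv (x # w) @ x # w = winv w @ [(a, \<not> b), (a, b)] @ w"
    using x by (simp add: winv_Cons)
  ultimately have "mg_eq C (winv (x # w) @ x # w) (winv w @ w)" by (simp only: append.simps append_Nil)
  then show ?case using Cons.IH by (rule mg_trans)
qed

lemma winv_cancel2: "mg_eq C (w @ winv w) []"
  using winv_cancel[of C "winv w"] by (simp add: winv_winv)

lemma mg_group: "group (medial_group C)"
proof (rule groupI)
  fix x y assume "x \<in> carrier (medial_group C)" "y \<in> carrier (medial_group C)"
  then show "x \<otimes>\<^bsub>medial_group C\<^esub> y \<in> carrier (medial_group C)"
  proof -
    obtain u v where "x = mg_class C u" "y = mg_class C v"
      using \<open>x \<in> _\<close> \<open>y \<in> _\<close> by (auto simp: medial_group_def)
    then show ?thesis by (simp only: mg_mult) (simp add: medial_group_def)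
  qed
next
  show "\<one>\<^bsub>medial_group C\<^esub> \<in> carrier (medial_group C)" by (simp add: medial_group_def)
next
  fix x y z assume "x \<in> carrier (medial_group C)" "y \<in> carrier (medial_group C)" "z \<in> carrier (medial_group C)"
  then obtain u v w where "x = mg_class C u" "y = mg_class C v" "z = mg_class C w"
    by (auto simp: medial_group_def)
  then show "x \<otimes>\<^bsub>medial_group C\<^esub> y \<otimes>\<^bsub>medial_group C\<^esub> z = x \<otimes>\<^bsub>medial_group C\<^esub> (y \<otimes>\<^bsub>medial_group C\<^esub> z)"
    by (simp only: mg_mult append_assoc)
next
  fix x assume "x \<in> carrier (medial_group C)"
  then show "\<one>\<^bsub>medial_group C\<^esub> \<otimes>\<^bsub>medial_group C\<^esub> x = x"
  proof -
    obtain u where "x = mg_class C u" using \<open>x \<in> _\<close> by (auto simp: medial_group_def)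
    moreover have "\<one>\<^bsub>medial_group C\<^esub> = mg_class C []" by (simp add: medial_group_def)
    ultimately show ?thesis by (simp only: mg_mult append_Nil)
  qed
next
  fix x assume "x \<in> carrier (medial_group C)"
  then obtain w where x: "x = mg_class C w" by (auto simp: medial_group_def)
  have "mg_class C (winv w) \<otimes>\<^bsub>medial_group C\<^esub> x = \<one>\<^bsub>medial_group C\<^esub>"
  proof -
    have "mg_class C (winv w) \<otimes>\<^bsub>medial_group C\<^esub> x = mg_class C (winv w @ w)"
      using x by (simp only: mg_mult)
    also have "\<dots> = mg_class C []" using winv_cancel[of C w] by (simp only: mg_class_eq)
    finally show ?thesis by (simp add: medial_group_def)
  qed
  moreover have "mg_class C (winv w) \<in> carrier (medial_group C)" by (simp add: medial_group_def)
  ultimately show "\<exists>y\<in>carrier (medial_group C). y \<otimes>\<^bsub>medial_group C\<^esub> x = \<one>\<^bsub>medial_group C\<^esub>" by (rule bexI)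
qed


lemma mg_inv: "inv\<^bsub>medial_group C\<^esub> (mg_class C w) = mg_class C (winv w)"
proof -
  interpret G: group "medial_group C" by (rule mg_group)
  have "mg_class C (winv w) \<otimes>\<^bsub>medial_group C\<^esub> mg_class C w = mg_class C []"
    using winv_cancel[of C w] by (simp only: mg_mult mg_class_eq)
  then show ?thesis
    by (intro G.inv_equality) (simp_all add: medial_group_def)
qed

fun altp :: "('g, 'm) monoid_scheme \<Rightarrow> bool \<Rightarrow> 'g list \<Rightarrow> 'g" where
  "altp G b [] = \<one>\<^bsub>G\<^esub>"
| "altp G b (x # xs) = (if b then x else inv\<^bsub>G\<^esub> x) \<otimes>\<^bsub>G\<^esub> altp G (\<not> b) xs"

context group
begin

lemma altp_closed: "set xs \<subseteq> carrier G \<Longrightarrow> altp G b xs \<in> carrier G"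
  by (induction xs arbitrary: b) auto

lemma altp_append: "set xs \<subseteq> carrier G \<Longrightarrow> set ys \<subseteq> carrier G \<Longrightarrow>
  altp G b (xs @ ys) = altp G b xs \<otimes> altp G (if even (length xs) then b else \<not> b) ys"
  by (induction xs arbitrary: b) (auto simp: m_assoc altp_closed)

lemma altp_rev:
  assumes K: "K \<subseteq> carrier G"
    and med: "\<And>x y z. x \<in> K \<Longrightarrow> y \<in> K \<Longrightarrow> z \<in> K \<Longrightarrow> x \<otimes> inv y \<otimes> z = z \<otimes> inv y \<otimes> x"
  shows "set xs \<subseteq> K \<Longrightarrow> odd (length xs) \<Longrightarrow> altp G b xs = altp G b (rev xs)"
proof (induction "length xs" arbitrary: xs b rule: less_induct)
  case less
  define s where "s = (\<lambda>b x. if b then x else inv x)"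
  have sc: "\<And>b x. x \<in> K \<Longrightarrow> s b x \<in> carrier G" using K by (auto simp: s_def)
  have medb: "\<And>b x y z. x \<in> K \<Longrightarrow> y \<in> K \<Longrightarrow> z \<in> K \<Longrightarrow>
     s b x \<otimes> s (\<not> b) y \<otimes> s b z = s b z \<otimes> s (\<not> b) y \<otimes> s b x"
  proof -
    fix b x y z assume xyz: "x \<in> K" "y \<in> K" "z \<in> K"
    then have c: "x \<in> carrier G" "y \<in> carrier G" "z \<in> carrier G" using K by auto
    show "s b x \<otimes> s (\<not> b) y \<otimes> s b z = s b z \<otimes> s (\<not> b) y \<otimes> s b x"
    proof (cases b)
      case True then show ?thesis using med[OF xyz] by (simp add: s_def)
    next
      case False
      have "inv x \<otimes> y \<otimes> inv z = inv (z \<otimes> inv y \<otimes> x)"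
        using c by (simp add: inv_mult_group m_assoc)
      also have "\<dots> = inv (x \<otimes> inv y \<otimes> z)" using med[OF xyz] by simp
      also have "\<dots> = inv z \<otimes> y \<otimes> inv x"
        using c by (simp add: inv_mult_group m_assoc)
      finally show ?thesis using False by (simp add: s_def)
    qed
  qed
  have altK: "\<And>ys b. set ys \<subseteq> K \<Longrightarrow> altp G b ys \<in> carrier G" using K altp_closed by blast
  show ?case
  proof (cases "length xs = 1")
    case True then show ?thesis by (cases xs) auto
  next
    case False
    have len: "2 \<le> length xs" using less.prems(2) False by presburger
    have "\<exists>x1 x2 X. xs = x1 # x2 # X" using len by (cases xs; cases "tl xs") auto
    then obtain x1 x2 X where xs: "xs = x1 # x2 # X" by blast
    have X0: "X \<noteq> []" using less.prems xs False by auto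
    then obtain z M where rX: "rev X = z # M" by (cases "rev X") auto
    have X: "X = rev M @ [z]" using rX by (metis rev_rev_ident rev.simps(2))
    have inK: "x1 \<in> K" "x2 \<in> K" "z \<in> K" "set M \<subseteq> K"
      using less.prems xs X by auto
    have lM: "even (length M)" using less.prems xs X by auto
    have IH: "\<And>ys b. length ys < length xs \<Longrightarrow> set ys \<subseteq> K \<Longrightarrow> odd (length ys) \<Longrightarrow>
        altp G b ys = altp G b (rev ys)" using less.hyps by blast
    have altc: "\<And>b x ys. altp G b (x # ys) = s b x \<otimes> altp G (\<not> b) ys" by (simp add: s_def)
    have sK: "\<And>x. x \<in> K \<Longrightarrow> x \<in> carrier G" using K by auto
    have cM: "set M \<subseteq> carrier G" using inK K by auto
    have A1: "altp G b X = s b z \<otimes> altp G (\<not> b) M"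
      using IH[of X b] less.prems xs rX by (auto simp: altc s_def)
    have A2: "s b x1 \<otimes> altp G (\<not> b) M = altp G b (rev M) \<otimes> s b x1"
    proof -
      have "s b x1 \<otimes> altp G (\<not> b) M = altp G b (x1 # M)" by (simp add: altc s_def)
      also have "\<dots> = altp G b (rev M @ [x1])" using IH[of "x1 # M" b] inK lM xs X by auto
      also have "\<dots> = altp G b (rev M) \<otimes> s b x1"
        using altp_append[of "rev M" "[x1]" b] cM sK inK lM sc by (simp add: altc s_def)
      finally show ?thesis .
    qed
    have A3: "s (\<not> b) x2 \<otimes> altp G b (rev M) = altp G (\<not> b) M \<otimes> s (\<not> b) x2"
    proof -
      have "s (\<not> b) x2 \<otimes> altp G b (rev M) = altp G (\<not> b) (x2 # rev M)" by (simp add: altc s_def)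
      also have "\<dots> = altp G (\<not> b) (M @ [x2])" using IH[of "x2 # rev M" "\<not> b"] inK lM xs X by auto
      also have "\<dots> = altp G (\<not> b) M \<otimes> s (\<not> b) x2"
        using altp_append[of M "[x2]" "\<not> b"] cM sK inK lM sc by (simp add: altc s_def)
      finally show ?thesis .
    qed
    have cx: "s b x1 \<in> carrier G" "s (\<not> b) x2 \<in> carrier G" "s b z \<in> carrier G"
      "altp G (\<not> b) M \<in> carrier G" "altp G b (rev M) \<in> carrier G"
      using sc inK altK by auto
    have "altp G b xs = s b x1 \<otimes> (s (\<not> b) x2 \<otimes> (s b z \<otimes> altp G (\<not> b) M))"
      using xs A1 by (simp add: altc s_def)
    also have "\<dots> = (s b x1 \<otimes> s (\<not> b) x2 \<otimes> s b z) \<otimes> altp G (\<not> b) M"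
      using cx by (simp add: m_assoc)
    also have "\<dots> = (s b z \<otimes> s (\<not> b) x2 \<otimes> s b x1) \<otimes> altp G (\<not> b) M"
      using medb[OF inK(1,2,3)] by simp
    also have "\<dots> = s b z \<otimes> (s (\<not> b) x2 \<otimes> (s b x1 \<otimes> altp G (\<not> b) M))"
      using cx by (simp add: m_assoc)
    also have "\<dots> = s b z \<otimes> ((altp G (\<not> b) M \<otimes> s (\<not> b) x2) \<otimes> s b x1)"
      using A2 A3 cx by (simp add: m_assoc[symmetric])
    also have "\<dots> = altp G b (rev xs)"
    proof -
      have "rev xs = z # (M @ [x2, x1])" using xs rX by simp
      then have "altp G b (rev xs) = s b z \<otimes> altp G (\<not> b) (M @ [x2, x1])" by (simp add: altc s_def)
      also have "\<dots> = s b z \<otimes> (altp G (\<not> b) M \<otimes> (s (\<not> b) x2 \<otimes> (s b x1 \<otimes> \<one>)))"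
        using altp_append[of M "[x2, x1]" "\<not> b"] cM sK inK lM by (simp add: altc s_def)
      finally show ?thesis using cx by (simp add: m_assoc)
    qed
    finally show ?thesis .
  qed
qed

end

lemma alt_prod_altp:
  "(\<forall>j<length ks. odd (ks ! j) = (b = even j)) \<Longrightarrow> alt_prod G c ks = altp G b (map c ks)"
proof (induction ks arbitrary: b)
  case Nil then show ?case by (simp add: alt_prod_def)
next
  case (Cons i ks)
  have h0: "odd i = b" using Cons.prems by (metis length_Cons zero_less_Suc nth_Cons_0 even_zero)
  have "\<forall>j<length ks. odd (ks ! j) = ((\<not> b) = even j)"
  proof (intro allI impI)
    fix j assume "j < length ks"
    then have "odd ((i # ks) ! Suc j) = (b = even (Suc j))" using Cons.prems by auto
    then show "odd (ks ! j) = ((\<not> b) = even j)" by auto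
  qed
  then have "alt_prod G c ks = altp G (\<not> b) (map c ks)" by (rule Cons.IH)
  then show ?case using h0 by (simp add: alt_prod_def)
qed

lemma mg_conj: "g \<in> carrier (medial_group C) \<Longrightarrow>
   \<exists>w. g \<otimes>\<^bsub>medial_group C\<^esub> arc_gen C y \<otimes>\<^bsub>medial_group C\<^esub> inv\<^bsub>medial_group C\<^esub> g = mg_class C (wconj w y)"
proof -
  assume "g \<in> carrier (medial_group C)"
  then obtain w where g: "g = mg_class C w" by (auto simp: medial_group_def)
  show ?thesis unfolding g arc_gen_def mg_inv mg_mult wconj_def by (intro exI[of _ w]) simp
qed

theorem lemma27:
  fixes C :: "('a::finite \<times> 'a \<times> 'a) set"
    and n :: nat
    and c :: "nat \<Rightarrow> 'a word set"
    and a :: "nat \<Rightarrow> 'a"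
  assumes "odd n" and "n \<ge> 3"
    and "\<And>i. 1 \<le> i \<Longrightarrow> i \<le> n \<Longrightarrow>
           \<exists>g\<in>carrier (medial_group C).
             c i = g \<otimes>\<^bsub>medial_group C\<^esub> arc_gen C (a i)
                     \<otimes>\<^bsub>medial_group C\<^esub> inv\<^bsub>medial_group C\<^esub> g"
  shows "alt_prod (medial_group C) c [1..<n+1] = alt_prod (medial_group C) c (rev [1..<n+1])"
proof -
  interpret G: group "medial_group C" by (rule mg_group)
  define K where "K = {x. \<exists>w y. x = mg_class C (wconj w y)}"
  have Kc: "K \<subseteq> carrier (medial_group C)" by (auto simp: K_def medial_group_def)
  have med: "\<And>x y z. x \<in> K \<Longrightarrow> y \<in> K \<Longrightarrow> z \<in> K \<Longrightarrow>
     x \<otimes>\<^bsub>medial_group C\<^esub> inv\<^bsub>medial_group C\<^esub> y \<otimes>\<^bsub>medial_group C\<^esub> z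
     = z \<otimes>\<^bsub>medial_group C\<^esub> inv\<^bsub>medial_group C\<^esub> y \<otimes>\<^bsub>medial_group C\<^esub> x"
  proof -
    fix x y z assume "x \<in> K" "y \<in> K" "z \<in> K"
    then obtain w1 y1 w2 y2 w3 y3 where
      "x = mg_class C (wconj w1 y1)" "y = mg_class C (wconj w2 y2)" "z = mg_class C (wconj w3 y3)"
      by (auto simp: K_def)
    then show "x \<otimes>\<^bsub>medial_group C\<^esub> inv\<^bsub>medial_group C\<^esub> y \<otimes>\<^bsub>medial_group C\<^esub> z
     = z \<otimes>\<^bsub>medial_group C\<^esub> inv\<^bsub>medial_group C\<^esub> y \<otimes>\<^bsub>medial_group C\<^esub> x"
      using mg_medial[of C w1 y1 w2 y2 w3 y3]
      by (simp only: mg_inv mg_mult mg_class_eq append_assoc)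
  qed
  have cK: "set (map c [1..<n+1]) \<subseteq> K"
  proof
    fix x assume "x \<in> set (map c [1..<n+1])"
    then obtain i where i: "1 \<le> i" "i \<le> n" "x = c i" by auto
    then obtain g where "g \<in> carrier (medial_group C)"
      "c i = g \<otimes>\<^bsub>medial_group C\<^esub> arc_gen C (a i) \<otimes>\<^bsub>medial_group C\<^esub> inv\<^bsub>medial_group C\<^esub> g"
      using assms(3) by blast
    then show "x \<in> K" using mg_conj[of g C "a i"] i by (auto simp: K_def)
  qed
  have oddl: "odd (length (map c [1..<n+1]))" using assms(1,2) by simp
  have "alt_prod (medial_group C) c [1..<n+1] = altp (medial_group C) True (map c [1..<n+1])"
    by (rule alt_prod_altp) (simp del: upt_Suc add: nth_upt)
  also have "\<dots> = altp (medial_group C) True (rev (map c [1..<n+1]))"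
    using G.altp_rev[OF Kc med cK] oddl by blast
  also have "\<dots> = alt_prod (medial_group C) c (rev [1..<n+1])"
    unfolding rev_map
  proof (rule alt_prod_altp[symmetric])
    show "\<forall>j<length (rev [1..<n+1]). odd (rev [1..<n+1] ! j) = (True = even j)"
    proof (intro allI impI)
      fix j assume "j < length (rev [1..<n+1])"
      then have "j < n" by (simp del: upt_Suc)
      then have "rev [1..<n+1] ! j = n - j" by (simp del: upt_Suc add: rev_nth nth_upt)
      then show "odd (rev [1..<n+1] ! j) = (True = even j)" using assms(1) \<open>j < n\<close>
        by presburger
    qed
  qed
  finally show ?thesis .
qed

end
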